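(* Let $\Omega$ be the closed unit ball in $\mathbb{R}^3$ and let $\boldsymbol{\eta}$ be a smooth divergence-free vector field on $\Omega$ with $\nabla\times\nabla\times\boldsymbol{\eta}=0$. Then: (i) the poloidal and toroidal scalars $P_{\boldsymbol{\eta}},T_{\boldsymbol{\eta}}$ of $\boldsymbol{\eta}$ can be chosen to be harmonic functions on $\Omega$; (ii) with this choice, the poloidal part of $\boldsymbol{\eta}$ is a gradient of a harmonic function, namely $$\nabla\times\nabla\times(\mathbf{r}P_{\boldsymbol{\eta}})=\nabla\big[\partial_r(rP_{\boldsymbol{\eta}})\big],$$ where $\partial_r(rP_{\boldsymbol{\eta}})$ is harmonic on $\Omega$.
   Context: Use spherical coordinates $(r,\lambda,\theta)$ on $\Omega$, and write $\mathbf{r}=r\hat{\mathbf{r}}$ for the position vector. Every smooth divergence-free vector field $\mathbf{w}$ on $\Omega$ admits a poloidal–toroidal decomposition $$\mathbf{w}=\nabla\times\nabla\times(\mathbf{r}P_{\mathbf{w}})+\nabla\times(\mathbf{r}T_{\mathbf{w}}),$$ with smooth scalar functions $P_{\mathbf{w}}$ (the poloidal scalar) and $T_{\mathbf{w}}$ (the toroidal scalar). These scalars are unique up to the addition of arbitrary functions of $r$ alone. *)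

theory Defs
  imports "HOL-Analysis.Analysis"
begin

text \<open>Points of R^3 are elements of real^3, the position vector at x is x itself.
  Omega is the closed unit ball cball 0 1.\<close>

definition partial :: "3 \<Rightarrow> (real^3 \<Rightarrow> 'b::real_normed_vector) \<Rightarrow> real^3 \<Rightarrow> 'b" where
  "partial i f x = frechet_derivative f (at x) (axis i 1)"

fun iter_partial :: "3 list \<Rightarrow> (real^3 \<Rightarrow> 'b::real_normed_vector) \<Rightarrow> real^3 \<Rightarrow> 'b" where
  "iter_partial [] f = f"
| "iter_partial (i # is) f = partial i (iter_partial is f)"

definition smooth_on :: "(real^3) set \<Rightarrow> (real^3 \<Rightarrow> 'b::real_normed_vector) \<Rightarrow> bool" where
  "smooth_on U f \<longleftrightarrow> (\<forall>is. iter_partial is f differentiable_on U)"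

definition smooth_on_Omega :: "(real^3 \<Rightarrow> 'b::real_normed_vector) \<Rightarrow> bool" where
  "smooth_on_Omega f \<longleftrightarrow> (\<exists>U. open U \<and> cball 0 1 \<subseteq> U \<and> smooth_on U f)"

definition grad :: "(real^3 \<Rightarrow> real) \<Rightarrow> real^3 \<Rightarrow> real^3" where
  "grad f x = (\<chi> i. partial i f x)"

definition div3 :: "(real^3 \<Rightarrow> real^3) \<Rightarrow> real^3 \<Rightarrow> real" where
  "div3 F x = (\<Sum>i\<in>UNIV. partial i (\<lambda>y. F y $ i) x)"

definition curl :: "(real^3 \<Rightarrow> real^3) \<Rightarrow> real^3 \<Rightarrow> real^3" where
  "curl F x = vector
     [partial 2 (\<lambda>y. F y $ 3) x - partial 3 (\<lambda>y. F y $ 2) x,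
      partial 3 (\<lambda>y. F y $ 1) x - partial 1 (\<lambda>y. F y $ 3) x,
      partial 1 (\<lambda>y. F y $ 2) x - partial 2 (\<lambda>y. F y $ 1) x]"

definition laplacian :: "(real^3 \<Rightarrow> real) \<Rightarrow> real^3 \<Rightarrow> real" where
  "laplacian f x = (\<Sum>i\<in>UNIV. partial i (partial i f) x)"

definition harmonic_on_Omega :: "(real^3 \<Rightarrow> real) \<Rightarrow> bool" where
  "harmonic_on_Omega f \<longleftrightarrow> (\<forall>x\<in>cball 0 1. laplacian f x = 0)"

definition pol_tor_rep :: "(real^3 \<Rightarrow> real^3) \<Rightarrow> (real^3 \<Rightarrow> real) \<Rightarrow> (real^3 \<Rightarrow> real) \<Rightarrow> bool" where
  "pol_tor_rep w P T \<longleftrightarrow>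
     (\<forall>x\<in>cball 0 1. w x = curl (curl (\<lambda>y. P y *\<^sub>R y)) x + curl (\<lambda>y. T y *\<^sub>R y) x)"

text \<open>The radial derivative d/dr (r P) = P + r dP/dr, where r d/dr is the Euler
  operator x . grad (this is also its continuous extension to the origin).\<close>
definition dr_rP :: "(real^3 \<Rightarrow> real) \<Rightarrow> real^3 \<Rightarrow> real" where
  "dr_rP P x = P x + x \<bullet> grad P x"

end

theory Submission
  imports Defs
begin


lemma partial_has:
  "(f has_derivative D) (at x) \<Longrightarrow> partial i f x = D (axis i 1)"
  unfolding partial_def using frechet_derivative_at by metis

lemma frechet_sum:
  fixes f :: "real^3 \<Rightarrow> real"
  assumes "f differentiable (at x)"
  shows "frechet_derivative f (at x) v = (\<Sum>i\<in>UNIV. v$i * partial i f x)"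
proof -
  have lin: "linear (frechet_derivative f (at x))"
    using assms frechet_derivative_works has_derivative_linear by blast
  have "frechet_derivative f (at x) v = frechet_derivative f (at x) (\<Sum>i\<in>UNIV. v$i *\<^sub>R axis i 1)"
    using basis_expansion[of v] by (simp add: scalar_mult_eq_scaleR)
  also have "\<dots> = (\<Sum>i\<in>UNIV. v$i * frechet_derivative f (at x) (axis i 1))"
    using lin by (simp add: linear_sum linear_scale)
  finally show ?thesis by (simp add: partial_def)
qed

lemma has_deriv_partials:
  fixes f :: "real^3 \<Rightarrow> real"
  assumes "f differentiable (at x)"
  shows "(f has_derivative (\<lambda>v. \<Sum>i\<in>UNIV. v$i * partial i f x)) (at x)"
proof -
  have "(f has_derivative frechet_derivative f (at x)) (at x)"
    using assms frechet_derivative_works by blast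
  moreover have "frechet_derivative f (at x) = (\<lambda>v. \<Sum>i\<in>UNIV. v$i * partial i f x)"
    using frechet_sum[OF assms] by auto
  ultimately show ?thesis by simp
qed

lemma partial_cong:
  assumes "open S" "x \<in> S" "\<And>y. y \<in> S \<Longrightarrow> f y = g y"
  shows "partial i f x = partial i g x"
proof -
  have "\<And>D. (f has_derivative D) (at x) \<longleftrightarrow> (g has_derivative D) (at x)"
    using has_derivative_transform_within_open[OF _ assms(1,2)] assms(3) by metis
  then show ?thesis unfolding partial_def frechet_derivative_def by simp
qed

lemma iter_partial_append: "iter_partial is (partial i f) = iter_partial (is @ [i]) f"
  by (induction "is") auto

lemma iter_partial_cong:
  assumes "open S" "\<And>y. y \<in> S \<Longrightarrow> f y = g y"
  shows "y \<in> S \<Longrightarrow> iter_partial is f y = iter_partial is g y"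
  using assms by (induction "is" arbitrary: y) (auto intro!: partial_cong[OF assms(1)])

lemma differentiable_on_cong_open:
  assumes "open S" "\<And>y. y \<in> S \<Longrightarrow> f y = g y" "f differentiable_on S"
  shows "g differentiable_on S"
  using assms unfolding differentiable_on_def differentiable_def
  by (metis has_derivative_transform_within_open)

lemma smooth_on_cong:
  assumes "open S" "\<And>y. y \<in> S \<Longrightarrow> f y = g y" "smooth_on S f"
  shows "smooth_on S g"
  unfolding smooth_on_def
proof
  fix "is" :: "3 list"
  have "iter_partial is f differentiable_on S" using assms(3) unfolding smooth_on_def by blast
  moreover have "\<And>y. y \<in> S \<Longrightarrow> iter_partial is f y = iter_partial is g y"
    by (rule iter_partial_cong[OF assms(1,2)])
  ultimately show "iter_partial is g differentiable_on S"
    using differentiable_on_cong_open[OF assms(1)] by blast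
qed

lemma smooth_partial: "smooth_on S f \<Longrightarrow> smooth_on S (partial i f)"
  unfolding smooth_on_def by (simp add: iter_partial_append)

lemma smooth_diff_on: "smooth_on S f \<Longrightarrow> f differentiable_on S"
  unfolding smooth_on_def by (metis iter_partial.simps(1))

lemma smooth_diff_at: "smooth_on S f \<Longrightarrow> open S \<Longrightarrow> x \<in> S \<Longrightarrow> f differentiable (at x)"
  using smooth_diff_on differentiable_on_def at_within_open by metis

lemma smooth_cont: "smooth_on S f \<Longrightarrow> continuous_on S f"
  using smooth_diff_on differentiable_imp_continuous_on by blast

lemma smooth_mono: "smooth_on S f \<Longrightarrow> T \<subseteq> S \<Longrightarrow> smooth_on T f"
  unfolding smooth_on_def using differentiable_on_subset by blast

definition Cn :: "nat \<Rightarrow> (real^3) set \<Rightarrow> (real^3 \<Rightarrow> 'b::real_normed_vector) \<Rightarrow> bool" where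
  "Cn n S f \<longleftrightarrow> (\<forall>is. length is \<le> n \<longrightarrow> iter_partial is f differentiable_on S)"

lemma smooth_Cn: "smooth_on S f \<longleftrightarrow> (\<forall>n. Cn n S f)"
  unfolding smooth_on_def Cn_def by auto

lemma Cn_0: "Cn 0 S f \<longleftrightarrow> f differentiable_on S"
  unfolding Cn_def by auto

lemma Cn_Suc: "Cn (Suc n) S f \<longleftrightarrow> f differentiable_on S \<and> (\<forall>i. Cn n S (partial i f))"
proof
  assume H: "Cn (Suc n) S f"
  have "f differentiable_on S" using H unfolding Cn_def
    by (metis iter_partial.simps(1) le0 list.size(3))
  moreover have "Cn n S (partial i f)" for i unfolding Cn_def
  proof (intro allI impI)
    fix "is" :: "3 list" assume "length is \<le> n"
    then have "length (is @ [i]) \<le> Suc n" by simp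
    then show "iter_partial is (partial i f) differentiable_on S"
      using H unfolding Cn_def iter_partial_append by blast
  qed
  ultimately show "f differentiable_on S \<and> (\<forall>i. Cn n S (partial i f))" by blast
next
  assume H: "f differentiable_on S \<and> (\<forall>i. Cn n S (partial i f))"
  show "Cn (Suc n) S f" unfolding Cn_def
  proof (intro allI impI)
    fix "is" :: "3 list" assume L: "length is \<le> Suc n"
    show "iter_partial is f differentiable_on S"
    proof (cases "is" rule: rev_cases)
      case Nil then show ?thesis using H by simp
    next
      case (snoc js i)
      then have "length js \<le> n" using L by simp
      then have "iter_partial js (partial i f) differentiable_on S" using H unfolding Cn_def by blast
      then show ?thesis using snoc by (simp add: iter_partial_append)
    qed
  qed
qed

lemma Cn_cong:
  assumes "open S" "\<And>y. y \<in> S \<Longrightarrow> f y = g y" "Cn n S f"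
  shows "Cn n S g"
  unfolding Cn_def
proof (intro allI impI)
  fix "is" :: "3 list" assume "length is \<le> n"
  then have "iter_partial is f differentiable_on S" using assms(3) unfolding Cn_def by blast
  moreover have "\<And>y. y \<in> S \<Longrightarrow> iter_partial is f y = iter_partial is g y"
    by (rule iter_partial_cong[OF assms(1,2)])
  ultimately show "iter_partial is g differentiable_on S"
    using differentiable_on_cong_open[OF assms(1)] by blast
qed




lemma partial_const[simp]: "partial i (\<lambda>y. c) = (\<lambda>x. 0)"
  by (rule ext, rule partial_has[where D="\<lambda>v. 0", simplified]) (rule has_derivative_const)

lemma partial_coord: "partial i (\<lambda>y::real^3. y$j) = (\<lambda>x. if i = j then 1 else 0)"
proof (rule ext)
  fix x :: "real^3"
  have "((\<lambda>y::real^3. y$j) has_derivative (\<lambda>v. v$j)) (at x)"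
    by (rule bounded_linear_imp_has_derivative) (rule bounded_linear_vec_nth)
  then show "partial i (\<lambda>y::real^3. y$j) x = (if i = j then 1 else 0)"
    by (simp add: partial_has axis_def)
qed

lemma partial_add:
  fixes f g :: "real^3 \<Rightarrow> real"
  assumes "f differentiable (at x)" "g differentiable (at x)"
  shows "partial i (\<lambda>y. f y + g y) x = partial i f x + partial i g x"
proof -
  have "((\<lambda>y. f y + g y) has_derivative (\<lambda>v. frechet_derivative f (at x) v + frechet_derivative g (at x) v)) (at x)"
    using assms by (intro has_derivative_add) (auto simp: frechet_derivative_works[symmetric])
  from partial_has[OF this] show ?thesis by (simp add: partial_def)
qed

lemma partial_diff:
  fixes f g :: "real^3 \<Rightarrow> real"
  assumes "f differentiable (at x)" "g differentiable (at x)"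
  shows "partial i (\<lambda>y. f y - g y) x = partial i f x - partial i g x"
proof -
  have "((\<lambda>y. f y - g y) has_derivative (\<lambda>v. frechet_derivative f (at x) v - frechet_derivative g (at x) v)) (at x)"
    using assms by (intro has_derivative_diff) (auto simp: frechet_derivative_works[symmetric])
  from partial_has[OF this] show ?thesis by (simp add: partial_def)
qed

lemma partial_mult:
  fixes f g :: "real^3 \<Rightarrow> real"
  assumes "f differentiable (at x)" "g differentiable (at x)"
  shows "partial i (\<lambda>y. f y * g y) x = partial i f x * g x + f x * partial i g x"
proof -
  have "((\<lambda>y. f y * g y) has_derivative (\<lambda>v. f x * frechet_derivative g (at x) v + frechet_derivative f (at x) v * g x)) (at x)"
    using assms by (intro has_derivative_mult) (auto simp: frechet_derivative_works[symmetric])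
  from partial_has[OF this] show ?thesis by (simp add: partial_def)
qed

lemma partial_sum:
  fixes f :: "'i \<Rightarrow> real^3 \<Rightarrow> real"
  assumes "finite I" "\<And>k. k \<in> I \<Longrightarrow> f k differentiable (at x)"
  shows "partial i (\<lambda>y. \<Sum>k\<in>I. f k y) x = (\<Sum>k\<in>I. partial i (f k) x)"
proof -
  have "((\<lambda>y. \<Sum>k\<in>I. f k y) has_derivative (\<lambda>v. \<Sum>k\<in>I. frechet_derivative (f k) (at x) v)) (at x)"
    using assms by (intro has_derivative_sum) (auto simp: frechet_derivative_works[symmetric])
  from partial_has[OF this] show ?thesis by (simp add: partial_def)
qed

lemma partial_comp:
  fixes F :: "real^3 \<Rightarrow> real^3"
  assumes "F differentiable (at x)"
  shows "partial i (\<lambda>y. F y $ m) x = partial i F x $ m"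
proof -
  have "((\<lambda>y. F y $ m) has_derivative (\<lambda>v. frechet_derivative F (at x) v $ m)) (at x)"
    using assms by (intro bounded_linear.has_derivative[OF bounded_linear_vec_nth]) (auto simp: frechet_derivative_works[symmetric])
  from partial_has[OF this] show ?thesis by (simp add: partial_def)
qed

lemma diffon_at: "f differentiable_on S \<Longrightarrow> open S \<Longrightarrow> y \<in> S \<Longrightarrow> f differentiable (at y)"
  using differentiable_on_def at_within_open by metis

lemma Cn_mono: "Cn (Suc n) S f \<Longrightarrow> Cn n S f"
  unfolding Cn_def by simp

lemma diff_on_comp:
  fixes F :: "real^3 \<Rightarrow> real^3"
  assumes "F differentiable_on S" shows "(\<lambda>y. F y $ m) differentiable_on S"
  unfolding differentiable_on_def
proof
  fix x assume "x \<in> S"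
  then obtain D where "(F has_derivative D) (at x within S)"
    using assms unfolding differentiable_on_def differentiable_def by blast
  then have "((\<lambda>y. F y $ m) has_derivative (\<lambda>v. D v $ m)) (at x within S)"
    by (rule bounded_linear.has_derivative[OF bounded_linear_vec_nth])
  then show "(\<lambda>y. F y $ m) differentiable at x within S" unfolding differentiable_def by blast
qed

lemma Cn_add:
  fixes f g :: "real^3 \<Rightarrow> real"
  assumes "open S" shows "Cn n S f \<Longrightarrow> Cn n S g \<Longrightarrow> Cn n S (\<lambda>y. f y + g y)"
proof (induction n arbitrary: f g)
  case 0 then show ?case unfolding Cn_0 by (rule differentiable_on_add)
next
  case (Suc n)
  have df: "f differentiable_on S" "g differentiable_on S" using Suc.prems by (auto simp: Cn_Suc)
  have "Cn n S (partial i (\<lambda>y. f y + g y))" for i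
  proof (rule Cn_cong[OF assms])
    have p: "Cn n S (partial i f)" "Cn n S (partial i g)" using Suc.prems by (auto simp: Cn_Suc)
    show "Cn n S (\<lambda>y. partial i f y + partial i g y)" using Suc.IH[OF p] .
    show "partial i f y + partial i g y = partial i (\<lambda>y. f y + g y) y" if "y \<in> S" for y
      using partial_add[OF diffon_at[OF df(1) assms that] diffon_at[OF df(2) assms that]] by simp
  qed
  moreover have "(\<lambda>y. f y + g y) differentiable_on S" using df by (rule differentiable_on_add)
  ultimately show ?case unfolding Cn_Suc by blast
qed

lemma Cn_diff:
  fixes f g :: "real^3 \<Rightarrow> real"
  assumes "open S" shows "Cn n S f \<Longrightarrow> Cn n S g \<Longrightarrow> Cn n S (\<lambda>y. f y - g y)"
proof (induction n arbitrary: f g)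
  case 0 then show ?case unfolding Cn_0 by (rule differentiable_on_diff)
next
  case (Suc n)
  have df: "f differentiable_on S" "g differentiable_on S" using Suc.prems by (auto simp: Cn_Suc)
  have "Cn n S (partial i (\<lambda>y. f y - g y))" for i
  proof (rule Cn_cong[OF assms])
    have p: "Cn n S (partial i f)" "Cn n S (partial i g)" using Suc.prems by (auto simp: Cn_Suc)
    show "Cn n S (\<lambda>y. partial i f y - partial i g y)" using Suc.IH[OF p] .
    show "partial i f y - partial i g y = partial i (\<lambda>y. f y - g y) y" if "y \<in> S" for y
      using partial_diff[OF diffon_at[OF df(1) assms that] diffon_at[OF df(2) assms that]] by simp
  qed
  moreover have "(\<lambda>y. f y - g y) differentiable_on S" using df by (rule differentiable_on_diff)
  ultimately show ?case unfolding Cn_Suc by blast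
qed

lemma Cn_mult:
  fixes f g :: "real^3 \<Rightarrow> real"
  assumes "open S" shows "Cn n S f \<Longrightarrow> Cn n S g \<Longrightarrow> Cn n S (\<lambda>y. f y * g y)"
proof (induction n arbitrary: f g)
  case 0 then show ?case unfolding Cn_0 by (rule differentiable_on_mult)
next
  case (Suc n)
  have df: "f differentiable_on S" "g differentiable_on S" using Suc.prems by (auto simp: Cn_Suc)
  have Cf: "Cn n S f" "Cn n S g"
    using Suc.prems Cn_mono by blast+
  have "Cn n S (partial i (\<lambda>y. f y * g y))" for i
  proof (rule Cn_cong[OF assms])
    have p: "Cn n S (partial i f)" "Cn n S (partial i g)" using Suc.prems by (auto simp: Cn_Suc)
    have "Cn n S (\<lambda>y. partial i f y * g y)" using Suc.IH[OF p(1) Cf(2)] .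
    moreover have "Cn n S (\<lambda>y. f y * partial i g y)" using Suc.IH[OF Cf(1) p(2)] .
    ultimately show "Cn n S (\<lambda>y. partial i f y * g y + f y * partial i g y)"
      by (rule Cn_add[OF assms])
    show "partial i f y * g y + f y * partial i g y = partial i (\<lambda>y. f y * g y) y" if "y \<in> S" for y
      using partial_mult[OF diffon_at[OF df(1) assms that] diffon_at[OF df(2) assms that]] by simp
  qed
  moreover have "(\<lambda>y. f y * g y) differentiable_on S" using df by (rule differentiable_on_mult)
  ultimately show ?case unfolding Cn_Suc by blast
qed

lemma Cn_const: "Cn n S (\<lambda>y. c)"
  by (induction n arbitrary: c) (auto simp: Cn_0 Cn_Suc)

lemma diff_coord: "(\<lambda>y::real^3. y$j) differentiable_on S"
  unfolding differentiable_on_def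
  by (intro ballI bounded_linear_imp_differentiable bounded_linear_vec_nth)

lemma Cn_coord: "Cn n S (\<lambda>y::real^3. y$j)"
proof (cases n)
  case 0 then show ?thesis
    by (simp add: Cn_0 diff_coord)
next
  case (Suc m) then show ?thesis
    by (auto simp: Cn_Suc partial_coord diff_coord intro: Cn_const)
qed

lemma Cn_comp:
  fixes F :: "real^3 \<Rightarrow> real^3"
  assumes "open S" shows "Cn n S F \<Longrightarrow> Cn n S (\<lambda>y. F y $ m)"
proof (induction n arbitrary: F)
  case 0 then show ?case
    by (simp add: Cn_0 diff_on_comp)
next
  case (Suc n)
  have df: "F differentiable_on S" using Suc.prems by (auto simp: Cn_Suc)
  have d2: "(\<lambda>y. F y $ m) differentiable_on S"
    using df by (rule diff_on_comp)
  have "Cn n S (partial i (\<lambda>y. F y $ m))" for i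
  proof (rule Cn_cong[OF assms])
    have p: "Cn n S (partial i F)" using Suc.prems by (auto simp: Cn_Suc)
    show "Cn n S (\<lambda>y. partial i F y $ m)" using Suc.IH[OF p] .
    show "partial i F y $ m = partial i (\<lambda>y. F y $ m) y" if "y \<in> S" for y
      using partial_comp[OF diffon_at[OF df assms that]] by simp
  qed
  then show ?case using d2 unfolding Cn_Suc by blast
qed

lemma smooth_add: "open S \<Longrightarrow> smooth_on S f \<Longrightarrow> smooth_on S g \<Longrightarrow> smooth_on S (\<lambda>y. f y + g y :: real)"
  by (simp add: smooth_Cn Cn_add)
lemma smooth_diff: "open S \<Longrightarrow> smooth_on S f \<Longrightarrow> smooth_on S g \<Longrightarrow> smooth_on S (\<lambda>y. f y - g y :: real)"
  by (simp add: smooth_Cn Cn_diff)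
lemma smooth_mult: "open S \<Longrightarrow> smooth_on S f \<Longrightarrow> smooth_on S g \<Longrightarrow> smooth_on S (\<lambda>y. f y * g y :: real)"
  by (simp add: smooth_Cn Cn_mult)
lemma smooth_const: "smooth_on S (\<lambda>y. c)"
  by (simp add: smooth_Cn Cn_const)
lemma smooth_coord: "smooth_on S (\<lambda>y::real^3. y$j)"
  by (simp add: smooth_Cn Cn_coord)
lemma smooth_comp: "open S \<Longrightarrow> smooth_on S (F :: real^3 \<Rightarrow> real^3) \<Longrightarrow> smooth_on S (\<lambda>y. F y $ m)"
  by (simp add: smooth_Cn Cn_comp)
lemma smooth_sum:
  fixes f :: "'i \<Rightarrow> real^3 \<Rightarrow> real"
  assumes "open S" "finite I"
  shows "(\<And>k. k \<in> I \<Longrightarrow> smooth_on S (f k)) \<Longrightarrow> smooth_on S (\<lambda>y. \<Sum>k\<in>I. f k y)"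
  using assms(2)
proof (induction I rule: finite_induct)
  case empty then show ?case by (simp add: smooth_const)
next
  case (insert k I) then show ?case by (simp add: smooth_add[OF assms(1)])
qed




lemma deriv_line:
  fixes f :: "real^3 \<Rightarrow> real"
  assumes "f differentiable (at (y0 + s *\<^sub>R axis i 1))"
  shows "((\<lambda>s. f (y0 + s *\<^sub>R axis i 1)) has_real_derivative partial i f (y0 + s *\<^sub>R axis i 1)) (at s)"
proof -
  let ?y = "y0 + s *\<^sub>R axis i 1"
  have g: "((\<lambda>s. y0 + s *\<^sub>R axis i 1) has_derivative (\<lambda>h. h *\<^sub>R axis i 1)) (at s)"
    by (auto intro!: derivative_eq_intros)
  have D: "((\<lambda>s. f (y0 + s *\<^sub>R axis i 1)) has_derivative
          (\<lambda>h. \<Sum>k\<in>UNIV. (h *\<^sub>R axis i 1)$k * partial k f ?y)) (at s)"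
    using diff_chain_at[OF g has_deriv_partials[OF assms]] by (simp add: o_def)
  have E: "(\<lambda>h. \<Sum>k\<in>UNIV. (h *\<^sub>R axis i (1::real))$k * partial k f ?y) = (\<lambda>h. partial i f ?y * h)"
  proof
    fix h :: real
    have "(h *\<^sub>R axis i (1::real))$k * partial k f ?y = (if k = i then partial i f ?y * h else 0)" for k
      by (simp add: axis_def)
    then show "(\<Sum>k\<in>UNIV. (h *\<^sub>R axis i (1::real))$k * partial k f ?y) = partial i f ?y * h"
      by (simp add: sum.delta')
  qed
  from D[unfolded E] show ?thesis by (simp add: has_field_derivative_def)
qed

lemma schwarz_est:
  fixes f :: "real^3 \<Rightarrow> real"
  assumes S: "open S" "smooth_on S f" "x \<in> S" and e: "e > 0"
  shows "\<exists>d>0. \<forall>h. 0 < h \<and> h < d \<longrightarrow>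
     \<bar>(f (x + h *\<^sub>R axis i 1 + h *\<^sub>R axis j 1) - f (x + h *\<^sub>R axis i 1) - f (x + h *\<^sub>R axis j 1) + f x)
       - h\<^sup>2 * partial j (partial i f) x\<bar> \<le> e * h\<^sup>2"
proof -
  let ?a = "axis i (1::real)" and ?b = "axis j (1::real)"
  define f2 where "f2 = partial j (partial i f)"
  have sm1: "smooth_on S (partial i f)" and sm2: "smooth_on S f2"
    using S smooth_partial unfolding f2_def by blast+
  have "continuous (at x) f2"
    using smooth_cont[OF sm2] S continuous_on_eq_continuous_at by blast
  then obtain \<delta> where \<delta>: "\<delta> > 0" "\<And>y. dist y x < \<delta> \<Longrightarrow> dist (f2 y) (f2 x) < e"
    using e unfolding continuous_at_eps_delta by blast
  obtain r where r: "r > 0" "ball x r \<subseteq> S" using S open_contains_ball by blast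
  define d where "d = min \<delta> r / 3"
  have d: "d > 0" "3 * d \<le> \<delta>" "3 * d \<le> r" using \<delta> r by (auto simp: d_def)
  have inS: "x + s *\<^sub>R ?a + t *\<^sub>R ?b \<in> S" "dist (x + s *\<^sub>R ?a + t *\<^sub>R ?b) x < \<delta>"
    if "\<bar>s\<bar> \<le> d" "\<bar>t\<bar> \<le> d" for s t
  proof -
    have "norm (s *\<^sub>R ?a + t *\<^sub>R ?b) \<le> \<bar>s\<bar> + \<bar>t\<bar>"
      by (rule order_trans[OF norm_triangle_ineq]) simp
    then have "norm (s *\<^sub>R ?a + t *\<^sub>R ?b) < 3 * d" using that d by linarith
    then have "dist (x + s *\<^sub>R ?a + t *\<^sub>R ?b) x < 3 * d"
      by (simp add: dist_norm add.assoc)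
    then show "x + s *\<^sub>R ?a + t *\<^sub>R ?b \<in> S" "dist (x + s *\<^sub>R ?a + t *\<^sub>R ?b) x < \<delta>"
      using r d by (auto simp: dist_commute subset_iff)
  qed
  have dif: "g differentiable (at (x + s *\<^sub>R ?a + t *\<^sub>R ?b))"
    if "\<bar>s\<bar> \<le> d" "\<bar>t\<bar> \<le> d" "smooth_on S g" for s t g
    using smooth_diff_at[OF that(3) S(1) inS(1)[OF that(1,2)]] .
  show ?thesis
  proof (intro exI[of _ d] conjI allI impI d(1))
    fix h :: real assume h: "0 < h \<and> h < d"
    define \<phi> where "\<phi> s = f ((x + h *\<^sub>R ?b) + s *\<^sub>R ?a) - f (x + s *\<^sub>R ?a)" for s
    have "\<exists>\<xi>. 0 < \<xi> \<and> \<xi> < h \<and> \<phi> h - \<phi> 0 = (h - 0) *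
        (partial i f ((x + h *\<^sub>R ?b) + \<xi> *\<^sub>R ?a) - partial i f (x + \<xi> *\<^sub>R ?a))"
    proof (rule MVT2)
      fix s assume s: "0 \<le> s" "s \<le> h"
      have e1: "x + s *\<^sub>R ?a + h *\<^sub>R ?b = (x + h *\<^sub>R ?b) + s *\<^sub>R ?a" by (simp add: algebra_simps)
      have d1: "f differentiable at ((x + h *\<^sub>R ?b) + s *\<^sub>R ?a)"
        using dif[of s h f] s h S by (simp add: e1[symmetric])
      have d2: "f differentiable at (x + s *\<^sub>R ?a)"
        using dif[of s 0 f] s h S by simp
      show "DERIV \<phi> s :> partial i f ((x + h *\<^sub>R ?b) + s *\<^sub>R ?a) - partial i f (x + s *\<^sub>R ?a)"
        unfolding \<phi>_def
        by (intro DERIV_diff deriv_line d1 d2)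
    qed (use h in auto)
    then obtain \<xi> where \<xi>: "0 < \<xi>" "\<xi> < h" and eq1': "\<phi> h - \<phi> 0 =
        h * (partial i f ((x + h *\<^sub>R ?b) + \<xi> *\<^sub>R ?a) - partial i f (x + \<xi> *\<^sub>R ?a))" by auto
    have p1: "(x + h *\<^sub>R ?b) + \<xi> *\<^sub>R ?a = x + \<xi> *\<^sub>R ?a + h *\<^sub>R ?b" by (simp add: algebra_simps)
    have eq1: "\<phi> h - \<phi> 0 =
        h * (partial i f (x + \<xi> *\<^sub>R ?a + h *\<^sub>R ?b) - partial i f (x + \<xi> *\<^sub>R ?a))"
      using eq1' unfolding p1 .
    have "\<exists>\<eta>. 0 < \<eta> \<and> \<eta> < h \<and> partial i f ((x + \<xi> *\<^sub>R ?a) + h *\<^sub>R ?b) - partial i f ((x + \<xi> *\<^sub>R ?a) + 0 *\<^sub>R ?b)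
        = (h - 0) * f2 ((x + \<xi> *\<^sub>R ?a) + \<eta> *\<^sub>R ?b)"
    proof (rule MVT2)
      fix t assume t: "0 \<le> t" "t \<le> h"
      have "partial i f differentiable at ((x + \<xi> *\<^sub>R ?a) + t *\<^sub>R ?b)"
        using dif[of \<xi> t "partial i f"] t h \<xi> sm1 by simp
      then show "DERIV (\<lambda>t. partial i f ((x + \<xi> *\<^sub>R ?a) + t *\<^sub>R ?b)) t :> f2 ((x + \<xi> *\<^sub>R ?a) + t *\<^sub>R ?b)"
        unfolding f2_def by (rule deriv_line)
    qed (use h in auto)
    then obtain \<eta> where \<eta>: "0 < \<eta>" "\<eta> < h" and eq2: "partial i f (x + \<xi> *\<^sub>R ?a + h *\<^sub>R ?b) - partial i f (x + \<xi> *\<^sub>R ?a)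
        = h * f2 (x + \<xi> *\<^sub>R ?a + \<eta> *\<^sub>R ?b)" by auto
    have p2: "(x + h *\<^sub>R ?b) + h *\<^sub>R ?a = x + h *\<^sub>R ?a + h *\<^sub>R ?b" by (simp add: algebra_simps)
    have ph: "\<phi> h - \<phi> 0 = f (x + h *\<^sub>R ?a + h *\<^sub>R ?b) - f (x + h *\<^sub>R ?a) - f (x + h *\<^sub>R ?b) + f x"
      unfolding \<phi>_def p2 by simp
    have D: "f (x + h *\<^sub>R ?a + h *\<^sub>R ?b) - f (x + h *\<^sub>R ?a) - f (x + h *\<^sub>R ?b) + f x
           = h\<^sup>2 * f2 (x + \<xi> *\<^sub>R ?a + \<eta> *\<^sub>R ?b)"
      unfolding ph[symmetric] eq1 eq2 by (simp add: power2_eq_square)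
    have "dist (f2 (x + \<xi> *\<^sub>R ?a + \<eta> *\<^sub>R ?b)) (f2 x) < e"
      using \<delta>(2) inS(2)[of \<xi> \<eta>] \<xi> \<eta> h by auto
    then have "\<bar>f2 (x + \<xi> *\<^sub>R ?a + \<eta> *\<^sub>R ?b) - f2 x\<bar> \<le> e" by (simp add: dist_real_def)
    then have Y: "\<bar>f2 (x + \<xi> *\<^sub>R ?a + \<eta> *\<^sub>R ?b) - f2 x\<bar> * h\<^sup>2 \<le> e * h\<^sup>2"
      by (intro mult_right_mono) auto
    have X: "\<bar>h\<^sup>2 * f2 (x + \<xi> *\<^sub>R ?a + \<eta> *\<^sub>R ?b) - h\<^sup>2 * f2 x\<bar> = \<bar>f2 (x + \<xi> *\<^sub>R ?a + \<eta> *\<^sub>R ?b) - f2 x\<bar> * h\<^sup>2"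
    proof -
      have "h\<^sup>2 * f2 (x + \<xi> *\<^sub>R ?a + \<eta> *\<^sub>R ?b) - h\<^sup>2 * f2 x = (f2 (x + \<xi> *\<^sub>R ?a + \<eta> *\<^sub>R ?b) - f2 x) * h\<^sup>2"
        by (simp add: algebra_simps)
      then show ?thesis by (simp add: abs_mult)
    qed
    then show "\<bar>(f (x + h *\<^sub>R ?a + h *\<^sub>R ?b) - f (x + h *\<^sub>R ?a) - f (x + h *\<^sub>R ?b) + f x)
       - h\<^sup>2 * partial j (partial i f) x\<bar> \<le> e * h\<^sup>2"
      unfolding D f2_def[symmetric] using X Y by linarith
  qed
qed

lemma schwarz:
  fixes f :: "real^3 \<Rightarrow> real"
  assumes S: "open S" "smooth_on S f" "x \<in> S"
  shows "partial j (partial i f) x = partial i (partial j f) x"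
proof -
  let ?A = "partial j (partial i f) x" and ?B = "partial i (partial j f) x"
  have "\<bar>?A - ?B\<bar> \<le> 2 * e" if e: "e > 0" for e
  proof -
    obtain d1 where d1: "d1 > 0" "\<And>h. 0 < h \<Longrightarrow> h < d1 \<Longrightarrow>
     \<bar>(f (x + h *\<^sub>R axis i 1 + h *\<^sub>R axis j 1) - f (x + h *\<^sub>R axis i 1) - f (x + h *\<^sub>R axis j 1) + f x)
       - h\<^sup>2 * ?A\<bar> \<le> e * h\<^sup>2"
      using schwarz_est[OF S e, of i j] by blast
    obtain d2 where d2: "d2 > 0" "\<And>h. 0 < h \<Longrightarrow> h < d2 \<Longrightarrow>
     \<bar>(f (x + h *\<^sub>R axis j 1 + h *\<^sub>R axis i 1) - f (x + h *\<^sub>R axis j 1) - f (x + h *\<^sub>R axis i 1) + f x)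
       - h\<^sup>2 * ?B\<bar> \<le> e * h\<^sup>2"
      using schwarz_est[OF S e, of j i] by blast
    define h where "h = min d1 d2 / 2"
    have h: "0 < h" "h < d1" "h < d2" using d1 d2 by (auto simp: h_def)
    have c: "x + h *\<^sub>R axis j 1 + h *\<^sub>R axis i 1 = x + h *\<^sub>R axis i 1 + h *\<^sub>R axis j 1"
      by (simp add: algebra_simps)
    define D where "D = f (x + h *\<^sub>R axis i 1 + h *\<^sub>R axis j 1) - f (x + h *\<^sub>R axis i 1) - f (x + h *\<^sub>R axis j 1) + f x"
    have 1: "\<bar>D - h\<^sup>2 * ?A\<bar> \<le> e * h\<^sup>2" using d1(2)[OF h(1,2)] unfolding D_def .
    have "D = f (x + h *\<^sub>R axis j 1 + h *\<^sub>R axis i 1) - f (x + h *\<^sub>R axis j 1) - f (x + h *\<^sub>R axis i 1) + f x"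
      unfolding D_def c by simp
    then have 2: "\<bar>D - h\<^sup>2 * ?B\<bar> \<le> e * h\<^sup>2" using d2(2)[OF h(1,3)] by simp
    have "\<bar>h\<^sup>2 * ?A - h\<^sup>2 * ?B\<bar> \<le> 2 * (e * h\<^sup>2)"
      using 1 2 unfolding abs_le_iff by linarith
    moreover have "\<bar>h\<^sup>2 * ?A - h\<^sup>2 * ?B\<bar> = h\<^sup>2 * \<bar>?A - ?B\<bar>"
      by (simp add: abs_mult right_diff_distrib[symmetric])
    ultimately have "h\<^sup>2 * \<bar>?A - ?B\<bar> \<le> h\<^sup>2 * (2 * e)" by (simp add: mult_ac)
    then show ?thesis using h(1) by (simp add: mult_le_cancel_left)
  qed
  then have "\<bar>?A - ?B\<bar> \<le> 0"
  proof -
    assume H: "\<And>e. e > 0 \<Longrightarrow> \<bar>?A - ?B\<bar> \<le> 2 * e"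
    show ?thesis
    proof (rule ccontr)
      assume "\<not> \<bar>?A - ?B\<bar> \<le> 0"
      then have "\<bar>?A - ?B\<bar> / 4 > 0" by simp
      from H[OF this] \<open>\<not> \<bar>?A - ?B\<bar> \<le> 0\<close> show False by (auto simp: field_simps)
    qed
  qed
  then show ?thesis by simp
qed




definition R :: "nat \<Rightarrow> (real^3 \<Rightarrow> real) \<Rightarrow> real^3 \<Rightarrow> real" where
  "R k f x = integral {0..1} (\<lambda>t. t^k * f (t *\<^sub>R x))"

lemma ball_scale: "x \<in> ball (0::real^3) r \<Longrightarrow> t \<in> {0..1} \<Longrightarrow> t *\<^sub>R x \<in> ball 0 r"
proof -
  assume a: "x \<in> ball (0::real^3) r" "t \<in> {0..1}"
  have "norm (t *\<^sub>R x) = \<bar>t\<bar> * norm x" by simp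
  also have "\<dots> \<le> norm x" using a(2) by (intro mult_left_le_one_le) auto
  also have "\<dots> < r" using a(1) by simp
  finally show ?thesis by simp
qed

lemma grad_cont: "open S \<Longrightarrow> smooth_on S f \<Longrightarrow> continuous_on S (grad f)"
  unfolding grad_def by (intro continuous_on_vec_lambda smooth_cont smooth_partial)

lemma cont_radial:
  assumes "continuous_on (ball 0 r) g" "x \<in> ball (0::real^3) r"
  shows "continuous_on {0..1} (\<lambda>t. t^k * g (t *\<^sub>R x))"
proof -
  have "continuous_on {0..1} (\<lambda>t. g (t *\<^sub>R x))"
    by (rule continuous_on_compose2[OF assms(1)]) (auto intro!: continuous_intros ball_scale[OF assms(2)])
  then show ?thesis by (intro continuous_intros)
qed

lemma int_radial:
  assumes "continuous_on (ball 0 r) g" "x \<in> ball (0::real^3) r"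
  shows "(\<lambda>t. t^k * g (t *\<^sub>R x)) integrable_on {0..1}"
  by (rule integrable_continuous_interval[OF cont_radial[OF assms]])

lemma R_cong: "(\<And>t. t \<in> {0..1} \<Longrightarrow> f (t *\<^sub>R x) = g (t *\<^sub>R x)) \<Longrightarrow> R k f x = R k g x"
  unfolding R_def by (intro integral_cong) auto

lemma inner_grad: "v \<bullet> grad f y = (\<Sum>i\<in>UNIV. v$i * partial i f y)"
  by (simp add: inner_vec_def grad_def)

lemma R_has_derivative:
  assumes V: "smooth_on (ball 0 r) f" "x \<in> ball (0::real^3) r"
  shows "(R k f has_derivative (\<lambda>v. \<Sum>i\<in>UNIV. v$i * R (Suc k) (partial i f) x)) (at x)"
proof -
  let ?U = "ball (0::real^3) r"
  define fx where "fx y t = (t^(Suc k)) *\<^sub>R blinfun_inner_left (grad f (t *\<^sub>R y))" for y :: "real^3" and t :: real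
  have fxa: "blinfun_apply (fx y t) v = t^(Suc k) * (\<Sum>i\<in>UNIV. v$i * partial i f (t *\<^sub>R y))" for y t v
    by (simp add: fx_def inner_grad scaleR_blinfun.rep_eq)
  have der: "((\<lambda>y. t^k * f (t *\<^sub>R y)) has_derivative blinfun_apply (fx y t)) (at y within ?U)"
    if "y \<in> ?U" "t \<in> cbox 0 1" for y t
  proof -
    have ty: "t *\<^sub>R y \<in> ?U" using ball_scale[OF that(1)] that(2) by simp
    have df: "f differentiable (at (t *\<^sub>R y))" by (rule smooth_diff_at[OF V(1) open_ball ty])
    have l: "((\<lambda>y. t *\<^sub>R y) has_derivative (\<lambda>v. t *\<^sub>R v)) (at y)"
      by (auto intro!: derivative_eq_intros)
    have "((\<lambda>y. f (t *\<^sub>R y)) has_derivative (\<lambda>v. \<Sum>i\<in>UNIV. (t *\<^sub>R v)$i * partial i f (t *\<^sub>R y))) (at y)"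
      using diff_chain_at[OF l has_deriv_partials[OF df]] by (simp add: o_def)
    then have "((\<lambda>y. t^k * f (t *\<^sub>R y)) has_derivative (\<lambda>v. t^k * (\<Sum>i\<in>UNIV. (t *\<^sub>R v)$i * partial i f (t *\<^sub>R y)))) (at y)"
      by (rule has_derivative_mult_right)
    moreover have "(\<lambda>v. t^k * (\<Sum>i\<in>UNIV. (t *\<^sub>R v)$i * partial i f (t *\<^sub>R y))) = blinfun_apply (fx y t)"
      by (rule ext) (simp add: fxa sum_distrib_left mult_ac)
    ultimately show ?thesis by (simp add: has_derivative_at_withinI)
  qed
  have intf: "(\<lambda>t. t^k * f (t *\<^sub>R y)) integrable_on cbox 0 1" if "y \<in> ?U" for y
    using int_radial[OF smooth_cont[OF V(1)] that] by simp
  have cg: "continuous_on ?U (grad f)" by (rule grad_cont[OF open_ball V(1)])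
  have cont: "continuous_on (?U \<times> cbox 0 1) (\<lambda>(y, t). fx y t)"
  proof -
    have "continuous_on (?U \<times> cbox 0 1) (\<lambda>p. grad f (snd p *\<^sub>R fst p))"
      by (rule continuous_on_compose2[OF cg]) (auto intro!: continuous_intros ball_scale)
    then have "continuous_on (?U \<times> cbox 0 1) (\<lambda>p. (snd p ^ Suc k) *\<^sub>R blinfun_inner_left (grad f (snd p *\<^sub>R fst p)))"
      by (intro continuous_intros continuous_on_compose2[OF bounded_linear.continuous_on[OF bounded_linear_blinfun_inner_left]]) auto
    then show ?thesis by (simp add: fx_def case_prod_beta)
  qed
  have "((\<lambda>y. integral (cbox 0 1) (\<lambda>t. t^k * f (t *\<^sub>R y))) has_derivative blinfun_apply (integral (cbox 0 1) (fx x))) (at x within ?U)"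
    by (rule leibniz_rule[OF der intf cont V(2) convex_ball])
  then have D1: "(R k f has_derivative blinfun_apply (integral (cbox 0 1) (fx x))) (at x)"
    unfolding R_def using at_within_open[OF V(2) open_ball] by simp
  have intfx: "fx x integrable_on cbox 0 1"
  proof (rule integrable_continuous)
    show "continuous_on (cbox 0 1) (fx x)"
      by (rule continuous_on_compose2[OF cont, where f="\<lambda>t. (x, t)", simplified])
         (auto intro!: continuous_intros V(2))
  qed
  have "blinfun_apply (integral (cbox 0 1) (fx x)) v = (\<Sum>i\<in>UNIV. v$i * R (Suc k) (partial i f) x)" for v
  proof -
    have cp: "continuous_on ?U (partial i f)" for i by (rule smooth_cont[OF smooth_partial[OF V(1)]])
    have "blinfun_apply (integral (cbox 0 1) (fx x)) v = integral {0..1} (\<lambda>t. fx x t v)"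
      using blinfun_apply_integral[OF intfx] by simp
    also have "\<dots> = integral {0..1} (\<lambda>t. \<Sum>i\<in>UNIV. v$i * (t^(Suc k) * partial i f (t *\<^sub>R x)))"
      by (simp add: fxa sum_distrib_left mult_ac)
    also have "\<dots> = (\<Sum>i\<in>UNIV. integral {0..1} (\<lambda>t. v$i * (t^(Suc k) * partial i f (t *\<^sub>R x))))"
    proof (rule integral_sum)
      fix i :: 3
      have "(\<lambda>t. t^(Suc k) * partial i f (t *\<^sub>R x)) integrable_on {0..1}"
        by (rule int_radial[OF cp V(2)])
      then show "(\<lambda>t. v$i * (t^(Suc k) * partial i f (t *\<^sub>R x))) integrable_on {0..1}"
        by (rule integrable_on_mult_right)
    qed simp
    also have "\<dots> = (\<Sum>i\<in>UNIV. v$i * R (Suc k) (partial i f) x)"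
      by (simp add: R_def)
    finally show ?thesis .
  qed
  then show ?thesis using D1 by (metis (no_types, lifting) ext)
qed

lemma R_diff: "smooth_on (ball 0 r) f \<Longrightarrow> x \<in> ball 0 r \<Longrightarrow> R k f differentiable (at x)"
  using R_has_derivative differentiable_def by blast

lemma partial_R: "smooth_on (ball 0 r) f \<Longrightarrow> x \<in> ball 0 r \<Longrightarrow> partial i (R k f) x = R (Suc k) (partial i f) x"
proof -
  assume a: "smooth_on (ball 0 r) f" "x \<in> ball 0 r"
  have "partial i (R k f) x = (\<Sum>j\<in>UNIV. axis i 1 $ j * R (Suc k) (partial j f) x)"
    by (rule partial_has[OF R_has_derivative[OF a]])
  also have "\<dots> = R (Suc k) (partial i f) x"
  proof -
    have "axis i 1 $ j * R (Suc k) (partial j f) x = (if j = i then R (Suc k) (partial i f) x else 0)" for j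
      by (simp add: axis_def)
    then show ?thesis by (simp add: sum.delta')
  qed
  finally show ?thesis .
qed

lemma smooth_R: "smooth_on (ball 0 r) f \<Longrightarrow> smooth_on (ball 0 r) (R k f)"
proof -
  have "\<And>k f. smooth_on (ball 0 r) f \<Longrightarrow> Cn n (ball 0 r) (R k f)" for n
  proof (induction n)
    case 0 then show ?case unfolding Cn_0 differentiable_on_def
      using R_diff differentiable_at_withinI by blast
  next
    case (Suc n)
    have d: "R k f differentiable_on ball 0 r" unfolding differentiable_on_def
      using R_diff[OF Suc.prems] differentiable_at_withinI by blast
    have "Cn n (ball 0 r) (partial i (R k f))" for i
    proof (rule Cn_cong[OF open_ball])
      show "Cn n (ball 0 r) (R (Suc k) (partial i f))"
        by (rule Suc.IH[OF smooth_partial[OF Suc.prems]])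
      show "R (Suc k) (partial i f) y = partial i (R k f) y" if "y \<in> ball 0 r" for y
        using partial_R[OF Suc.prems that] by simp
    qed
    then show ?case using d unfolding Cn_Suc by blast
  qed
  then show "smooth_on (ball 0 r) f \<Longrightarrow> smooth_on (ball 0 r) (R k f)"
    unfolding smooth_Cn by blast
qed




lemma deriv_dir:
  fixes h :: "real^3 \<Rightarrow> real"
  assumes "h differentiable (at (t *\<^sub>R x))"
  shows "((\<lambda>t. h (t *\<^sub>R x)) has_real_derivative (\<Sum>j\<in>UNIV. x$j * partial j h (t *\<^sub>R x))) (at t)"
proof -
  have g: "((\<lambda>t. t *\<^sub>R x) has_derivative (\<lambda>s. s *\<^sub>R x)) (at t)"
    by (auto intro!: derivative_eq_intros)
  have D: "((\<lambda>t. h (t *\<^sub>R x)) has_derivative (\<lambda>s. \<Sum>j\<in>UNIV. (s *\<^sub>R x)$j * partial j h (t *\<^sub>R x))) (at t)"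
    using diff_chain_at[OF g has_deriv_partials[OF assms]] by (simp add: o_def)
  have E: "(\<lambda>s. \<Sum>j\<in>UNIV. (s *\<^sub>R x)$j * partial j h (t *\<^sub>R x)) = (\<lambda>s. (\<Sum>j\<in>UNIV. x$j * partial j h (t *\<^sub>R x)) * s)"
    by (rule ext) (simp add: sum_distrib_right sum_distrib_left mult_ac)
  from D[unfolded E] show ?thesis by (simp add: has_field_derivative_def mult.commute)
qed

lemma ftc_R:
  assumes S: "smooth_on (ball 0 r) h" "x \<in> ball (0::real^3) r"
  shows "R 0 h x + (\<Sum>j\<in>UNIV. x$j * R 1 (partial j h) x) = h x"
proof -
  define g where "g t = t * h (t *\<^sub>R x)" for t
  define g' where "g' t = h (t *\<^sub>R x) + (\<Sum>j\<in>UNIV. x$j * partial j h (t *\<^sub>R x)) * t" for t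
  have "(g' has_integral (g 1 - g 0)) {0..1}"
  proof (rule fundamental_theorem_of_calculus)
    fix t :: real assume t: "t \<in> {0..1}"
    have "h differentiable (at (t *\<^sub>R x))"
      by (rule smooth_diff_at[OF S(1) open_ball ball_scale[OF S(2) t]])
    from DERIV_mult[OF DERIV_ident deriv_dir[OF this]]
    have "(g has_real_derivative g' t) (at t)"
      unfolding g_def g'_def by simp
    then show "(g has_vector_derivative g' t) (at t within {0..1})"
      by (simp add: has_real_derivative_iff_has_vector_derivative has_vector_derivative_at_within)
  qed simp
  then have I: "integral {0..1} g' = h x" by (simp add: g_def integral_unique)
  have c0: "continuous_on (ball 0 r) h" by (rule smooth_cont[OF S(1)])
  have cj: "continuous_on (ball 0 r) (partial j h)" for j by (rule smooth_cont[OF smooth_partial[OF S(1)]])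
  have i1: "(\<lambda>t. t^0 * h (t *\<^sub>R x)) integrable_on {0..1}" by (rule int_radial[OF c0 S(2)])
  have i2: "(\<lambda>t. t^1 * partial j h (t *\<^sub>R x)) integrable_on {0..1}" for j by (rule int_radial[OF cj S(2)])
  have i3: "(\<lambda>t. x$j * (t^1 * partial j h (t *\<^sub>R x))) integrable_on {0..1}" for j
    by (rule integrable_on_mult_right[OF i2])
  have "integral {0..1} g' = integral {0..1} (\<lambda>t. t^0 * h (t *\<^sub>R x)) +
      integral {0..1} (\<lambda>t. \<Sum>j\<in>UNIV. x$j * (t^1 * partial j h (t *\<^sub>R x)))"
  proof -
    have "g' = (\<lambda>t. t^0 * h (t *\<^sub>R x) + (\<Sum>j\<in>UNIV. x$j * (t^1 * partial j h (t *\<^sub>R x))))"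
      by (rule ext) (simp add: g'_def sum_distrib_left mult_ac)
    moreover have "(\<lambda>t. \<Sum>j\<in>UNIV. x$j * (t^1 * partial j h (t *\<^sub>R x))) integrable_on {0..1}"
      by (rule integrable_sum) (use i3 in auto)
    ultimately show ?thesis using i1 by (simp add: integral_add)
  qed
  also have "integral {0..1} (\<lambda>t. \<Sum>j\<in>UNIV. x$j * (t^1 * partial j h (t *\<^sub>R x)))
      = (\<Sum>j\<in>UNIV. x$j * R 1 (partial j h) x)"
    by (subst integral_sum) (use i3 in \<open>auto simp: R_def\<close>)
  finally show ?thesis using I by (simp add: R_def)
qed

lemma dr_rP_eq: "dr_rP P = (\<lambda>x. P x + (\<Sum>i\<in>UNIV. x$i * partial i P x))"
  by (rule ext) (simp add: dr_rP_def inner_grad)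

lemma lap_eq: "laplacian f = (\<lambda>x. \<Sum>i\<in>UNIV. partial i (partial i f) x)"
  by (rule ext) (simp add: laplacian_def)

lemma dr_rP_R:
  assumes S: "smooth_on (ball 0 r) h" "x \<in> ball (0::real^3) r"
  shows "dr_rP (R 0 h) x = h x"
  using ftc_R[OF S] partial_R[OF S] by (simp add: dr_rP_eq)

lemma poincare:
  fixes \<omega> :: "3 \<Rightarrow> real^3 \<Rightarrow> real"
  assumes S: "\<And>j. smooth_on (ball 0 r) (\<omega> j)" "x \<in> ball (0::real^3) r"
    and sym: "\<And>j t. t \<in> {0..1} \<Longrightarrow> partial i (\<omega> j) (t *\<^sub>R x) = partial j (\<omega> i) (t *\<^sub>R x)"
  shows "partial i (\<lambda>y. \<Sum>j\<in>UNIV. y$j * R 0 (\<omega> j) y) x = \<omega> i x"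
proof -
  have dR: "R 0 (\<omega> j) differentiable (at x)" for j by (rule R_diff[OF S])
  have dc: "(\<lambda>y::real^3. y$j) differentiable (at x)" for j
    by (rule bounded_linear_imp_differentiable[OF bounded_linear_vec_nth])
  have "partial i (\<lambda>y. \<Sum>j\<in>UNIV. y$j * R 0 (\<omega> j) y) x = (\<Sum>j\<in>UNIV. partial i (\<lambda>y. y$j * R 0 (\<omega> j) y) x)"
    by (rule partial_sum) (auto intro!: differentiable_mult dR dc)
  also have "\<dots> = (\<Sum>j\<in>UNIV. (if i = j then R 0 (\<omega> j) x else 0) + x$j * R 1 (partial i (\<omega> j)) x)"
    by (rule sum.cong) (simp_all add: partial_mult[OF dc dR] partial_coord partial_R[OF S])
  also have "\<dots> = R 0 (\<omega> i) x + (\<Sum>j\<in>UNIV. x$j * R 1 (partial j (\<omega> i)) x)"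
  proof -
    have "R 1 (partial i (\<omega> j)) x = R 1 (partial j (\<omega> i)) x" for j
      by (rule R_cong) (rule sym)
    then show ?thesis by (simp add: sum.distrib)
  qed
  also have "\<dots> = \<omega> i x" by (rule ftc_R[OF S])
  finally show ?thesis .
qed

lemma lap_R:
  assumes S: "smooth_on (ball 0 r) f" "x \<in> ball (0::real^3) r"
  shows "laplacian (R 0 f) x = R 2 (laplacian f) x"
proof -
  have "partial i (partial i (R 0 f)) x = R 2 (partial i (partial i f)) x" for i
  proof -
    have "partial i (partial i (R 0 f)) x = partial i (R 1 (partial i f)) x"
      by (rule partial_cong[OF open_ball S(2)]) (simp add: partial_R[OF S(1)])
    also have "\<dots> = R 2 (partial i (partial i f)) x"
      using partial_R[OF smooth_partial[OF S(1)] S(2)] by (simp add: numeral_2_eq_2)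
    finally show ?thesis .
  qed
  then have "laplacian (R 0 f) x = (\<Sum>i\<in>UNIV. R 2 (partial i (partial i f)) x)"
    by (simp add: laplacian_def)
  also have "\<dots> = R 2 (laplacian f) x"
  proof -
    have c: "continuous_on (ball 0 r) (partial i (partial i f))" for i
      by (intro smooth_cont smooth_partial S(1))
    have "(\<Sum>i\<in>UNIV. R 2 (partial i (partial i f)) x) =
        integral {0..1} (\<lambda>t. \<Sum>i\<in>UNIV. t^2 * partial i (partial i f) (t *\<^sub>R x))"
      unfolding R_def by (rule integral_sum[symmetric]) (auto intro!: int_radial[OF c S(2)])
    then show ?thesis by (simp add: R_def laplacian_def sum_distrib_left)
  qed
  finally show ?thesis .
qed




definition cyc :: "3 \<Rightarrow> 3 \<Rightarrow> 3 \<Rightarrow> bool" where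
  "cyc a b c \<longleftrightarrow> (a = 1 \<and> b = 2 \<and> c = 3) \<or> (a = 2 \<and> b = 3 \<and> c = 1) \<or> (a = 3 \<and> b = 1 \<and> c = 2)"

lemma cyc_ex: "\<exists>b c. cyc a b c"
  using exhaust_3[of a] unfolding cyc_def by blast

lemma cyc_rot: "cyc a b c \<Longrightarrow> cyc b c a"
  unfolding cyc_def by auto

lemma cyc_dist: "cyc a b c \<Longrightarrow> a \<noteq> b \<and> b \<noteq> c \<and> a \<noteq> c"
  unfolding cyc_def by auto

lemma sum_cyc: "cyc a b c \<Longrightarrow> sum g (UNIV::3 set) = g a + g b + g c"
  unfolding cyc_def sum_3 by (auto simp: ac_simps)

lemma curl_cyc: "cyc a b c \<Longrightarrow> curl F x $ a = partial b (\<lambda>y. F y $ c) x - partial c (\<lambda>y. F y $ b) x"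
  unfolding cyc_def curl_def by auto

lemma curl_cyc_fun: "cyc a b c \<Longrightarrow> (\<lambda>y. curl F y $ a) = (\<lambda>y. partial b (\<lambda>y. F y $ c) y - partial c (\<lambda>y. F y $ b) y)"
  using curl_cyc by blast

lemma sdiff: "open S \<Longrightarrow> smooth_on S f \<Longrightarrow> x \<in> S \<Longrightarrow> partial i f differentiable (at x)"
  by (rule smooth_diff_at[OF smooth_partial])

lemma curl_curl_comp:
  assumes S: "open S" "\<And>m. smooth_on S (\<lambda>y. F y $ m)" "x \<in> S" and c: "cyc a b c"
  shows "curl (curl F) x $ a =
    partial b (partial a (\<lambda>y. F y$b)) x - partial b (partial b (\<lambda>y. F y $ a)) x
    - partial c (partial c (\<lambda>y. F y $ a)) x + partial c (partial a (\<lambda>y. F y $ c)) x"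
proof -
  have "curl (curl F) x $ a = partial b (\<lambda>y. curl F y $ c) x - partial c (\<lambda>y. curl F y $ b) x"
    by (rule curl_cyc[OF c])
  also have "(\<lambda>y. curl F y $ c) = (\<lambda>y. partial a (\<lambda>y. F y $ b) y - partial b (\<lambda>y. F y $ a) y)"
    by (rule curl_cyc_fun[OF cyc_rot[OF cyc_rot[OF c]]])
  also have "(\<lambda>y. curl F y $ b) = (\<lambda>y. partial c (\<lambda>y. F y $ a) y - partial a (\<lambda>y. F y $ c) y)"
    by (rule curl_cyc_fun[OF cyc_rot[OF c]])
  finally show ?thesis
    by (simp add: partial_diff sdiff[OF S(1) S(2) S(3)])
qed

lemma partial_Py:
  fixes P :: "real^3 \<Rightarrow> real"
  assumes "P differentiable (at y)"
  shows "partial i (\<lambda>y. P y * y$j) y = partial i P y * y$j + (if i = j then P y else 0)"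
proof -
  have dc: "(\<lambda>y::real^3. y$j) differentiable (at y)"
    by (rule bounded_linear_imp_differentiable[OF bounded_linear_vec_nth])
  show ?thesis by (simp add: partial_mult[OF assms dc] partial_coord)
qed

lemma partial_yP:
  fixes P :: "real^3 \<Rightarrow> real"
  assumes "P differentiable (at y)"
  shows "partial i (\<lambda>y. y$j * P y) y = (if i = j then P y else 0) + y$j * partial i P y"
proof -
  have dc: "(\<lambda>y::real^3. y$j) differentiable (at y)"
    by (rule bounded_linear_imp_differentiable[OF bounded_linear_vec_nth])
  show ?thesis by (simp add: partial_mult[OF dc assms] partial_coord)
qed

lemma pp_Py:
  fixes P :: "real^3 \<Rightarrow> real"
  assumes S: "open S" "smooth_on S P" "x \<in> S" and ij: "i \<noteq> j"
  shows "partial k (partial i (\<lambda>y. P y * y$j)) x = partial k (partial i P) x * x$j + (if k = j then partial i P x else 0)"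
proof -
  have "partial k (partial i (\<lambda>y. P y * y$j)) x = partial k (\<lambda>y. partial i P y * y$j) x"
    by (rule partial_cong[OF S(1,3)]) (simp add: partial_Py[OF smooth_diff_at[OF S(2) S(1)]] ij)
  also have "\<dots> = partial k (partial i P) x * x$j + (if k = j then partial i P x else 0)"
    by (rule partial_Py[OF sdiff[OF S]])
  finally show ?thesis .
qed

lemma curlcurl_xP:
  fixes P :: "real^3 \<Rightarrow> real"
  assumes S: "open S" "smooth_on S P" "x \<in> S"
  shows "curl (curl (\<lambda>y. P y *\<^sub>R y)) x = grad (dr_rP P) x - laplacian P x *\<^sub>R x"
proof (subst vec_eq_iff, intro allI)
  fix a :: 3
  obtain b c where c: "cyc a b c" using cyc_ex by blast
  have d: "a \<noteq> b" "b \<noteq> c" "a \<noteq> c" using cyc_dist[OF c] by auto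
  have comp: "(\<lambda>y. (P y *\<^sub>R y) $ m) = (\<lambda>y. P y * y$m)" for m by simp
  have sm: "smooth_on S (\<lambda>y. (P y *\<^sub>R y) $ m)" for m
    unfolding comp by (intro smooth_mult S(1) S(2) smooth_coord)
  have dP: "P differentiable (at x)" by (rule smooth_diff_at[OF S(2) S(1) S(3)])
  have dPi: "partial i P differentiable (at x)" for i by (rule sdiff[OF S])
  have L: "curl (curl (\<lambda>y. P y *\<^sub>R y)) x $ a =
      (partial b (partial a P) x * x$b + partial a P x) - partial b (partial b P) x * x$a
      - partial c (partial c P) x * x$a + (partial c (partial a P) x * x$c + partial a P x)"
    unfolding curl_curl_comp[OF S(1) sm S(3) c] comp
    using pp_Py[OF S, of a b b] pp_Py[OF S, of b a b] pp_Py[OF S, of c a c] pp_Py[OF S, of a c c] d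
    by (simp add: eq_commute[of c a] eq_commute[of b a] eq_commute[of c b])
  have g: "grad (dr_rP P) x $ a = partial a P x + (\<Sum>m\<in>UNIV. (if a = m then partial m P x else 0) + x$m * partial a (partial m P) x)"
  proof -
    have "grad (dr_rP P) x $ a = partial a (\<lambda>x. P x + (\<Sum>i\<in>UNIV. x$i * partial i P x)) x"
      by (simp add: grad_def dr_rP_eq)
    also have "\<dots> = partial a P x + partial a (\<lambda>x. \<Sum>i\<in>UNIV. x$i * partial i P x) x"
      by (rule partial_add[OF dP]) (intro differentiable_sum ballI differentiable_mult dPi
          bounded_linear_imp_differentiable[OF bounded_linear_vec_nth]; simp)
    also have dm: "\<And>m. (\<lambda>y. y$m * partial m P y) differentiable (at x)"
      by (intro differentiable_mult dPi bounded_linear_imp_differentiable[OF bounded_linear_vec_nth])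
    have "partial a (\<lambda>x. \<Sum>i\<in>UNIV. x$i * partial i P x) x = (\<Sum>m\<in>UNIV. partial a (\<lambda>x. x$m * partial m P x) x)"
      by (rule partial_sum) (auto intro: dm)
    also have "\<dots> = (\<Sum>m\<in>UNIV. (if a = m then partial m P x else 0) + x$m * partial a (partial m P) x)"
      by (rule sum.cong) (simp_all add: partial_yP[OF dPi])
    finally show ?thesis .
  qed
  have s1: "partial b (partial a P) x = partial a (partial b P) x" by (rule schwarz[OF S])
  have s2: "partial c (partial a P) x = partial a (partial c P) x" by (rule schwarz[OF S])
  show "curl (curl (\<lambda>y. P y *\<^sub>R y)) x $ a = (grad (dr_rP P) x - laplacian P x *\<^sub>R x) $ a"
    unfolding L vector_minus_component g vector_scaleR_component laplacian_def
      sum_cyc[OF c] s1 s2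
    using d by (simp add: algebra_simps eq_commute[of c a] eq_commute[of b a] eq_commute[of c b])
qed

lemma curl_xT:
  fixes T :: "real^3 \<Rightarrow> real"
  assumes "T differentiable (at y)" "cyc a b c"
  shows "curl (\<lambda>y. T y *\<^sub>R y) y $ a = partial b T y * y$c - partial c T y * y$b"
proof -
  have comp: "(\<lambda>y. (T y *\<^sub>R y) $ m) = (\<lambda>y. T y * y$m)" for m by simp
  have d: "b \<noteq> c" "c \<noteq> b" using cyc_dist[OF assms(2)] by auto
  show ?thesis using d
    unfolding curl_cyc[OF assms(2)] comp by (simp add: partial_Py[OF assms(1)])
qed

lemma div_curl:
  assumes S: "open S" "\<And>m. smooth_on S (\<lambda>y. F y $ m)" "x \<in> S"
  shows "div3 (curl F) x = 0"
proof -
  let ?F = "\<lambda>m y. F y $ m"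
  have e: "(\<lambda>y. curl F y $ a) = (\<lambda>y. partial b (?F c) y - partial c (?F b) y)" if "cyc a b c" for a b c
    by (rule curl_cyc_fun[OF that])
  have c1: "cyc 1 2 3" "cyc 2 3 1" "cyc 3 1 2" by (auto simp: cyc_def)
  have dd: "partial i (?F m) differentiable (at x)" for i m by (rule sdiff[OF S(1) S(2) S(3)])
  have "div3 (curl F) x = partial 1 (\<lambda>y. partial 2 (?F 3) y - partial 3 (?F 2) y) x
     + partial 2 (\<lambda>y. partial 3 (?F 1) y - partial 1 (?F 3) y) x
     + partial 3 (\<lambda>y. partial 1 (?F 2) y - partial 2 (?F 1) y) x"
    unfolding div3_def sum_3 e[OF c1(1)] e[OF c1(2)] e[OF c1(3)] ..
  also have "\<dots> = 0"
    using schwarz[OF S(1) S(2) S(3), of _ _ 1] schwarz[OF S(1) S(2) S(3), of _ _ 2]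
      schwarz[OF S(1) S(2) S(3), of _ _ 3]
    by (simp add: partial_diff dd)
  finally show ?thesis .
qed




lemma big_ball:
  assumes "open U" "cball (0::real^3) 1 \<subseteq> U"
  obtains r where "r > 1" "ball 0 r \<subseteq> U"
proof -
  obtain e where e: "e > 0" "(\<Union>x\<in>cball (0::real^3) 1. ball x e) \<subseteq> U"
    using compact_subset_open_imp_ball_epsilon_subset[OF compact_cball assms(1,2)] by blast
  have "ball 0 (1 + e) \<subseteq> U"
  proof
    fix y :: "real^3" assume y: "y \<in> ball 0 (1 + e)"
    define x where "x = y /\<^sub>R (1 + e)"
    have n: "norm y < 1 + e" using y by simp
    have "norm x = norm y / (1 + e)" using e by (simp add: x_def divide_inverse_commute)
    also have "\<dots> < 1" using n e by simp
    finally have xb: "x \<in> cball 0 1" by simp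
    have c: "1 - 1/(1+e) = e/(1+e)" using e by (simp add: field_simps)
    have "y - x = (1 - 1/(1+e)) *\<^sub>R y" by (simp add: x_def scaleR_diff_left inverse_eq_divide)
    then have "y - x = (e / (1 + e)) *\<^sub>R y" unfolding c .
    then have "norm (y - x) = e / (1 + e) * norm y" using e by simp
    then have "dist x y = e / (1 + e) * norm y" by (simp add: dist_norm norm_minus_commute)
    also have "\<dots> < e / (1 + e) * (1 + e)" using e n by (intro mult_strict_left_mono) auto
    also have "\<dots> = e" using e by simp
    finally have "y \<in> ball x e" by simp
    then show "y \<in> U" using e(2) xb by blast
  qed
  then show ?thesis using that[of "1 + e"] e by simp
qed

lemma extend_zero:
  assumes "continuous_on (cball (0::real^3) 1) g" "\<And>x. x \<in> ball 0 1 \<Longrightarrow> g x = 0" "x \<in> cball 0 1"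
  shows "g x = (0::real)"
  using continuous_constant_on_closure[of "ball 0 1" g 0 x] assms by simp

lemma smooth_curl:
  assumes "open S" "\<And>m. smooth_on S (\<lambda>y. F y $ m)"
  shows "smooth_on S (\<lambda>y. curl F y $ a)"
proof -
  obtain b c where c: "cyc a b c" using cyc_ex by blast
  show ?thesis unfolding curl_cyc_fun[OF c]
    by (intro smooth_diff smooth_partial assms)
qed

lemma sym_from_curl:
  assumes "curl G x = 0"
  shows "partial i (\<lambda>y. G y $ j) x = partial j (\<lambda>y. G y $ i) x"
proof -
  have "curl G x $ 1 = 0" "curl G x $ 2 = 0" "curl G x $ 3 = 0" using assms by auto
  then have "partial 2 (\<lambda>y. G y $ 3) x = partial 3 (\<lambda>y. G y $ 2) x"
       "partial 3 (\<lambda>y. G y $ 1) x = partial 1 (\<lambda>y. G y $ 3) x"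
       "partial 1 (\<lambda>y. G y $ 2) x = partial 2 (\<lambda>y. G y $ 1) x"
    by (simp_all add: curl_def)
  then show ?thesis using exhaust_3[of i] exhaust_3[of j] by auto
qed

lemma curl_diff:
  fixes F G :: "real^3 \<Rightarrow> real^3"
  assumes "\<And>m. (\<lambda>y. F y $ m) differentiable (at x)" "\<And>m. (\<lambda>y. G y $ m) differentiable (at x)"
  shows "curl (\<lambda>y. F y - G y) x = curl F x - curl G x"
proof -
  have e: "(\<lambda>y. (F y - G y) $ m) = (\<lambda>y. F y $ m - G y $ m)" for m by simp
  show ?thesis unfolding vec_eq_iff forall_3
    by (simp add: curl_def e partial_diff assms)
qed

lemma div_diff:
  fixes F G :: "real^3 \<Rightarrow> real^3"
  assumes "\<And>m. (\<lambda>y. F y $ m) differentiable (at x)" "\<And>m. (\<lambda>y. G y $ m) differentiable (at x)"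
  shows "div3 (\<lambda>y. F y - G y) x = div3 F x - div3 G x"
proof -
  have e: "(\<lambda>y. (F y - G y) $ m) = (\<lambda>y. F y $ m - G y $ m)" for m by simp
  show ?thesis unfolding div3_def e
    by (simp add: partial_diff assms sum_subtractf)
qed

lemma smooth_lap: "open S \<Longrightarrow> smooth_on S f \<Longrightarrow> smooth_on S (laplacian f)"
  unfolding lap_eq by (intro smooth_sum smooth_partial) auto

lemma smooth_dr: "open S \<Longrightarrow> smooth_on S P \<Longrightarrow> smooth_on S (dr_rP P)"
  unfolding dr_rP_eq by (intro smooth_add smooth_sum smooth_mult smooth_coord smooth_partial) auto

lemma R_zero: "R k (\<lambda>y. 0) x = 0"
  by (simp add: R_def)

lemma R_vanish:
  assumes "x \<in> ball (0::real^3) 1" "\<And>y. y \<in> ball 0 1 \<Longrightarrow> g y = 0"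
  shows "R k g x = 0"
proof -
  have "R k g x = R k (\<lambda>y. 0) x"
    by (rule R_cong) (use assms ball_scale in auto)
  then show ?thesis by (simp add: R_zero)
qed

lemma grad_potential:
  fixes Z :: "real^3 \<Rightarrow> real^3"
  assumes V: "r > 1" "\<And>m. smooth_on (ball 0 r) (\<lambda>y. Z y $ m)"
    and curl0: "\<And>x. x \<in> ball 0 1 \<Longrightarrow> curl Z x = 0"
    and x: "x \<in> ball (0::real^3) 1"
  shows "partial i (\<lambda>y. \<Sum>j\<in>UNIV. y$j * R 0 (\<lambda>y. Z y $ j) y) x = Z x $ i"
proof (rule poincare[of r "\<lambda>j y. Z y $ j", OF V(2)])
  show "x \<in> ball 0 r" using x V(1) by auto
  fix j and t :: real assume t: "t \<in> {0..1}"
  have "t *\<^sub>R x \<in> ball 0 1" by (rule ball_scale[OF x t])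
  then show "partial i (\<lambda>y. Z y $ j) (t *\<^sub>R x) = partial j (\<lambda>y. Z y $ i) (t *\<^sub>R x)"
    by (intro sym_from_curl curl0)
qed




lemma partial_cmult:
  fixes f :: "real^3 \<Rightarrow> real"
  assumes "f differentiable (at x)"
  shows "partial i (\<lambda>y. c * f y) x = c * partial i f x"
  using partial_mult[OF _ assms, of "\<lambda>y. c"] by simp

lemma part2:
  assumes sm: "smooth_on_Omega P" and h: "harmonic_on_Omega P"
  shows "(\<forall>x\<in>cball 0 1. curl (curl (\<lambda>y. P y *\<^sub>R y)) x = grad (dr_rP P) x) \<and> harmonic_on_Omega (dr_rP P)"
proof
  obtain U where U: "open U" "cball 0 1 \<subseteq> U" "smooth_on U P"
    using sm unfolding smooth_on_Omega_def by blast
  show "\<forall>x\<in>cball 0 1. curl (curl (\<lambda>y. P y *\<^sub>R y)) x = grad (dr_rP P) x"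
  proof
    fix x :: "real^3" assume x: "x \<in> cball 0 1"
    have "laplacian P x = 0" using h x unfolding harmonic_on_Omega_def by blast
    then show "curl (curl (\<lambda>y. P y *\<^sub>R y)) x = grad (dr_rP P) x"
      using curlcurl_xP[OF U(1) U(3)] x U(2) by auto
  qed
  define D where "D = dr_rP P"
  have smD: "smooth_on U D" unfolding D_def by (rule smooth_dr[OF U(1) U(3)])
  have dPi: "\<And>i y. y \<in> U \<Longrightarrow> partial i P differentiable (at y)" by (rule sdiff[OF U(1) U(3)])
  have dP: "\<And>y. y \<in> U \<Longrightarrow> P differentiable (at y)" by (rule smooth_diff_at[OF U(3) U(1)])
  have pD: "partial i D y = 2 * partial i P y + (\<Sum>j\<in>UNIV. y$j * partial i (partial j P) y)"
    if y: "y \<in> U" for i y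
  proof -
    have dm: "\<And>m. (\<lambda>y. y$m * partial m P y) differentiable (at y)"
      by (intro differentiable_mult dPi[OF y] bounded_linear_imp_differentiable[OF bounded_linear_vec_nth])
    have "partial i D y = partial i P y + partial i (\<lambda>x. \<Sum>j\<in>UNIV. x$j * partial j P x) y"
      unfolding D_def dr_rP_eq
      by (rule partial_add[OF dP[OF y]]) (intro differentiable_sum; auto intro: dm)
    also have "partial i (\<lambda>x. \<Sum>j\<in>UNIV. x$j * partial j P x) y = (\<Sum>j\<in>UNIV. partial i (\<lambda>x. x$j * partial j P x) y)"
      by (rule partial_sum) (auto intro: dm)
    also have "\<dots> = (\<Sum>j\<in>UNIV. (if i = j then partial j P y else 0) + y$j * partial i (partial j P) y)"
      by (rule sum.cong) (simp_all add: partial_yP[OF dPi[OF y]])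
    also have "\<dots> = partial i P y + (\<Sum>j\<in>UNIV. y$j * partial i (partial j P) y)"
      by (simp add: sum.distrib)
    finally show ?thesis by simp
  qed
  have lapD: "laplacian D x = 0" if x: "x \<in> ball 0 1" for x
  proof -
    have xU: "x \<in> U" using x U(2) by auto
    have lap0: "\<And>y. y \<in> ball 0 1 \<Longrightarrow> laplacian P y = 0" using h unfolding harmonic_on_Omega_def by auto
    have ppp: "partial i (partial i (partial j P)) x = partial j (partial i (partial i P)) x" for i j
    proof -
      have "partial i (partial i (partial j P)) x = partial i (partial j (partial i P)) x"
        by (rule partial_cong[OF U(1) xU]) (rule schwarz[OF U(1) U(3)])
      also have "\<dots> = partial j (partial i (partial i P)) x"
        by (rule schwarz[OF U(1) smooth_partial[OF U(3)] xU])
      finally show ?thesis .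
    qed
    have s0: "(\<Sum>i\<in>UNIV. partial i (partial i (partial j P)) x) = 0" for j
    proof -
      have "(\<Sum>i\<in>UNIV. partial i (partial i (partial j P)) x) = (\<Sum>i\<in>UNIV. partial j (partial i (partial i P)) x)"
        by (intro sum.cong refl ppp)
      also have "\<dots> = partial j (\<lambda>y. \<Sum>i\<in>UNIV. partial i (partial i P) y) x"
        by (rule partial_sum[symmetric]) (auto intro: sdiff[OF U(1) smooth_partial[OF U(3)] xU])
      also have "\<dots> = partial j (\<lambda>y. 0) x"
        by (rule partial_cong[OF open_ball x]) (use lap0 in \<open>simp add: laplacian_def\<close>)
      finally show ?thesis by simp
    qed
    have ppD: "partial i (partial i D) x = 3 * partial i (partial i P) x + (\<Sum>j\<in>UNIV. x$j * partial i (partial i (partial j P)) x)" for i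
    proof -
      have dq: "\<And>j. partial i (partial j P) differentiable (at x)"
        by (rule sdiff[OF U(1) smooth_partial[OF U(3)] xU])
      have dm: "\<And>m. (\<lambda>y. y$m * partial i (partial m P) y) differentiable (at x)"
        by (intro differentiable_mult dq bounded_linear_imp_differentiable[OF bounded_linear_vec_nth])
      have "partial i (partial i D) x = partial i (\<lambda>y. 2 * partial i P y + (\<Sum>j\<in>UNIV. y$j * partial i (partial j P) y)) x"
        by (rule partial_cong[OF U(1) xU]) (rule pD)
      also have "\<dots> = partial i (\<lambda>y. 2 * partial i P y) x + partial i (\<lambda>y. \<Sum>j\<in>UNIV. y$j * partial i (partial j P) y) x"
      proof (rule partial_add)
        show "(\<lambda>y. 2 * partial i P y) differentiable (at x)"
          by (intro differentiable_mult differentiable_const dPi[OF xU])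
        show "(\<lambda>y. \<Sum>j\<in>UNIV. y $ j * partial i (partial j P) y) differentiable (at x)"
          by (rule differentiable_sum) (auto intro: dm)
      qed
      also have "partial i (\<lambda>y. 2 * partial i P y) x = 2 * partial i (partial i P) x"
        by (rule partial_cmult[OF dPi[OF xU]])
      also have "partial i (\<lambda>y. \<Sum>j\<in>UNIV. y$j * partial i (partial j P) y) x
          = (\<Sum>j\<in>UNIV. partial i (\<lambda>y. y$j * partial i (partial j P) y) x)"
        by (rule partial_sum) (auto intro: dm)
      also have "\<dots> = (\<Sum>j\<in>UNIV. (if i = j then partial i (partial j P) x else 0) + x$j * partial i (partial i (partial j P)) x)"
        by (rule sum.cong) (simp_all add: partial_yP[OF dq])
      also have "\<dots> = partial i (partial i P) x + (\<Sum>j\<in>UNIV. x$j * partial i (partial i (partial j P)) x)"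
        by (simp add: sum.distrib)
      finally show ?thesis by simp
    qed
    have "laplacian D x = (\<Sum>i\<in>UNIV. 3 * partial i (partial i P) x) + (\<Sum>i\<in>UNIV. \<Sum>j\<in>UNIV. x$j * partial i (partial i (partial j P)) x)"
      by (simp add: laplacian_def ppD sum.distrib)
    also have "(\<Sum>i\<in>UNIV. 3 * partial i (partial i P) x) = 3 * laplacian P x"
      by (simp add: laplacian_def sum_distrib_left)
    also have "(\<Sum>i\<in>UNIV. \<Sum>j\<in>UNIV. x$j * partial i (partial i (partial j P)) x) =
        (\<Sum>j\<in>UNIV. x$j * (\<Sum>i\<in>UNIV. partial i (partial i (partial j P)) x))"
      by (subst sum.swap) (simp add: sum_distrib_left)
    finally show ?thesis using lap0[OF x] s0 by simp
  qed
  have "continuous_on (cball 0 1) (laplacian D)"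
    by (rule continuous_on_subset[OF smooth_cont[OF smooth_lap[OF U(1) smD]] U(2)])
  then show "harmonic_on_Omega (dr_rP P)"
    unfolding harmonic_on_Omega_def D_def[symmetric]
    using extend_zero lapD by blast
qed




lemma part1:
  fixes \<eta> :: "real^3 \<Rightarrow> real^3"
  assumes "smooth_on_Omega \<eta>"
    and div0: "\<forall>x\<in>cball 0 1. div3 \<eta> x = 0"
    and cc0: "\<forall>x\<in>cball 0 1. curl (curl \<eta>) x = 0"
  shows "\<exists>P T. smooth_on_Omega P \<and> smooth_on_Omega T \<and> pol_tor_rep \<eta> P T
              \<and> harmonic_on_Omega P \<and> harmonic_on_Omega T"
proof -
  obtain U where U: "open U" "cball 0 1 \<subseteq> U" "smooth_on U \<eta>"
    using assms(1) unfolding smooth_on_Omega_def by blast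
  obtain r where r: "r > 1" "ball 0 r \<subseteq> U" using big_ball[OF U(1,2)] by blast
  define V where "V = ball (0::real^3) r"
  have oV: "open V" unfolding V_def by simp
  have BV: "ball 0 1 \<subseteq> V" "cball 0 1 \<subseteq> V" using r unfolding V_def by auto
  have inB: "x \<in> cball 0 1" if "x \<in> ball 0 1" for x using that by auto
  have sm\<eta>: "smooth_on V \<eta>" using smooth_mono[OF U(3)] r unfolding V_def by blast
  have smc: "\<And>m. smooth_on V (\<lambda>y. \<eta> y $ m)" by (rule smooth_comp[OF oV sm\<eta>])
  have sm\<omega>: "\<And>a. smooth_on V (\<lambda>y. curl \<eta> y $ a)" by (rule smooth_curl[OF oV smc])
  define \<psi> where "\<psi> = (\<lambda>y. \<Sum>j\<in>UNIV. y$j * R 0 (\<lambda>y. curl \<eta> y $ j) y)"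
  have sm\<psi>: "smooth_on V \<psi>" unfolding \<psi>_def V_def
    by (intro smooth_sum smooth_mult smooth_coord smooth_R sm\<omega>[unfolded V_def]) auto
  have d\<psi>: "partial i \<psi> x = curl \<eta> x $ i" if x: "x \<in> ball 0 1" for i x
    unfolding \<psi>_def
    by (rule grad_potential[OF r(1) sm\<omega>[unfolded V_def] _ x]) (use cc0 inB in auto)
  have lap\<psi>: "laplacian \<psi> x = 0" if x: "x \<in> ball 0 1" for x
  proof -
    have "laplacian \<psi> x = (\<Sum>i\<in>UNIV. partial i (\<lambda>y. curl \<eta> y $ i) x)"
      unfolding laplacian_def
      by (intro sum.cong refl partial_cong[OF open_ball x] d\<psi>)
    also have "\<dots> = div3 (curl \<eta>) x" by (simp add: div3_def)
    also have "\<dots> = 0" by (rule div_curl[OF oV smc]) (use x BV in auto)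
    finally show ?thesis .
  qed
  define T where "T = R 0 \<psi>"
  have smT: "smooth_on V T" unfolding T_def using sm\<psi> unfolding V_def by (rule smooth_R)
  have drT: "dr_rP T y = \<psi> y" if "y \<in> V" for y
    unfolding T_def using dr_rP_R[OF sm\<psi>[unfolded V_def]] that unfolding V_def by blast
  have lapT: "laplacian T x = 0" if x: "x \<in> ball 0 1" for x
  proof -
    have "laplacian T x = R 2 (laplacian \<psi>) x"
      unfolding T_def by (rule lap_R[OF sm\<psi>[unfolded V_def]]) (use x BV V_def in auto)
    also have "\<dots> = 0" by (rule R_vanish[OF x lap\<psi>])
    finally show ?thesis .
  qed
  have harmT: "harmonic_on_Omega T"
    unfolding harmonic_on_Omega_def
  proof
    fix x :: "real^3" assume "x \<in> cball 0 1"
    show "laplacian T x = 0"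
      by (rule extend_zero[OF continuous_on_subset[OF smooth_cont[OF smooth_lap[OF oV smT]] BV(2)] lapT \<open>x \<in> cball 0 1\<close>])
  qed
  define \<tau> where "\<tau> = (\<lambda>y. curl (\<lambda>z. T z *\<^sub>R z) y)"
  have smxT: "\<And>m. smooth_on V (\<lambda>z. (T z *\<^sub>R z) $ m)"
    by (simp, intro smooth_mult smooth_coord oV smT)
  have sm\<tau>: "\<And>a. smooth_on V (\<lambda>y. \<tau> y $ a)" unfolding \<tau>_def by (rule smooth_curl[OF oV smxT])
  have curl\<tau>: "curl \<tau> x = curl \<eta> x" if x: "x \<in> ball 0 1" for x
  proof -
    have xV: "x \<in> V" using x BV by auto
    have "curl \<tau> x = grad (dr_rP T) x - laplacian T x *\<^sub>R x"
      unfolding \<tau>_def by (rule curlcurl_xP[OF oV smT xV])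
    also have "\<dots> = grad (dr_rP T) x" using lapT[OF x] by simp
    also have "\<dots> = curl \<eta> x"
    proof (subst vec_eq_iff, intro allI)
      fix i
      have "grad (dr_rP T) x $ i = partial i \<psi> x"
        unfolding grad_def by (simp add: partial_cong[OF oV xV drT])
      then show "grad (dr_rP T) x $ i = curl \<eta> x $ i" using d\<psi>[OF x] by simp
    qed
    finally show ?thesis .
  qed
  define \<zeta> where "\<zeta> = (\<lambda>y. \<eta> y - \<tau> y)"
  have \<zeta>c: "(\<lambda>y. \<zeta> y $ m) = (\<lambda>y. \<eta> y $ m - \<tau> y $ m)" for m unfolding \<zeta>_def by simp
  have sm\<zeta>: "\<And>m. smooth_on V (\<lambda>y. \<zeta> y $ m)" unfolding \<zeta>c by (intro smooth_diff oV smc sm\<tau>)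
  have curl\<zeta>: "curl \<zeta> x = 0" if x: "x \<in> ball 0 1" for x
  proof -
    have xV: "x \<in> V" using x BV by auto
    have "curl \<zeta> x = curl \<eta> x - curl \<tau> x"
      unfolding \<zeta>_def by (rule curl_diff) (intro smooth_diff_at[OF _ oV xV] smc sm\<tau>)+
    then show ?thesis using curl\<tau>[OF x] by simp
  qed
  have div\<zeta>: "div3 \<zeta> x = 0" if x: "x \<in> ball 0 1" for x
  proof -
    have xV: "x \<in> V" using x BV by auto
    have "div3 \<zeta> x = div3 \<eta> x - div3 \<tau> x"
      unfolding \<zeta>_def by (rule div_diff) (intro smooth_diff_at[OF _ oV xV] smc sm\<tau>)+
    also have "div3 \<tau> x = 0" unfolding \<tau>_def by (rule div_curl[OF oV smxT xV])
    finally show ?thesis using div0 inB[OF x] by simp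
  qed
  define \<phi> where "\<phi> = (\<lambda>y. \<Sum>j\<in>UNIV. y$j * R 0 (\<lambda>y. \<zeta> y $ j) y)"
  have sm\<phi>: "smooth_on V \<phi>" unfolding \<phi>_def V_def
    by (intro smooth_sum smooth_mult smooth_coord smooth_R sm\<zeta>[unfolded V_def]) auto
  have d\<phi>: "partial i \<phi> x = \<zeta> x $ i" if x: "x \<in> ball 0 1" for i x
    unfolding \<phi>_def
    by (rule grad_potential[OF r(1) sm\<zeta>[unfolded V_def] curl\<zeta> x])
  have lap\<phi>: "laplacian \<phi> x = 0" if x: "x \<in> ball 0 1" for x
  proof -
    have "laplacian \<phi> x = (\<Sum>i\<in>UNIV. partial i (\<lambda>y. \<zeta> y $ i) x)"
      unfolding laplacian_def
      by (intro sum.cong refl partial_cong[OF open_ball x] d\<phi>)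
    also have "\<dots> = div3 \<zeta> x" by (simp add: div3_def)
    finally show ?thesis using div\<zeta>[OF x] by simp
  qed
  define P where "P = R 0 \<phi>"
  have smP: "smooth_on V P" unfolding P_def using sm\<phi> unfolding V_def by (rule smooth_R)
  have drP: "dr_rP P y = \<phi> y" if "y \<in> V" for y
    unfolding P_def using dr_rP_R[OF sm\<phi>[unfolded V_def]] that unfolding V_def by blast
  have lapP: "laplacian P x = 0" if x: "x \<in> ball 0 1" for x
  proof -
    have "laplacian P x = R 2 (laplacian \<phi>) x"
      unfolding P_def by (rule lap_R[OF sm\<phi>[unfolded V_def]]) (use x BV V_def in auto)
    also have "\<dots> = 0" by (rule R_vanish[OF x lap\<phi>])
    finally show ?thesis .
  qed
  have harmP: "harmonic_on_Omega P"
    unfolding harmonic_on_Omega_def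
  proof
    fix x :: "real^3" assume "x \<in> cball 0 1"
    show "laplacian P x = 0"
      by (rule extend_zero[OF continuous_on_subset[OF smooth_cont[OF smooth_lap[OF oV smP]] BV(2)] lapP \<open>x \<in> cball 0 1\<close>])
  qed
  have ccP: "curl (curl (\<lambda>y. P y *\<^sub>R y)) x = grad (dr_rP P) x - laplacian P x *\<^sub>R x" if "x \<in> V" for x
    by (rule curlcurl_xP[OF oV smP that])
  have repB: "curl (curl (\<lambda>y. P y *\<^sub>R y)) x + \<tau> x = \<eta> x" if x: "x \<in> ball 0 1" for x
  proof -
    have xV: "x \<in> V" using x BV by auto
    have "curl (curl (\<lambda>y. P y *\<^sub>R y)) x = grad (dr_rP P) x" using ccP[OF xV] lapP[OF x] by simp
    also have "\<dots> = \<zeta> x"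
    proof (subst vec_eq_iff, intro allI)
      fix i
      have "grad (dr_rP P) x $ i = partial i \<phi> x"
        unfolding grad_def by (simp add: partial_cong[OF oV xV drP])
      then show "grad (dr_rP P) x $ i = \<zeta> x $ i" using d\<phi>[OF x] by simp
    qed
    finally show ?thesis unfolding \<zeta>_def by simp
  qed
  have rep: "curl (curl (\<lambda>y. P y *\<^sub>R y)) x + \<tau> x = \<eta> x" if x: "x \<in> cball 0 1" for x
  proof (subst vec_eq_iff, intro allI)
    fix m
    define g where "g y = (curl (curl (\<lambda>y. P y *\<^sub>R y)) y + \<tau> y - \<eta> y) $ m" for y
    define g' where "g' y = partial m (dr_rP P) y - laplacian P y * y$m + \<tau> y $ m - \<eta> y $ m" for y
    have "continuous_on V g'" unfolding g'_def
      by (intro continuous_intros smooth_cont smooth_partial smooth_dr smooth_lap oV smP sm\<tau> smc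
          continuous_on_subset[OF smooth_cont[OF smooth_coord]] subset_refl)
    moreover have "g' y = g y" if "y \<in> V" for y
      unfolding g_def g'_def using ccP[OF that] by (simp add: grad_def)
    ultimately have "continuous_on V g" using continuous_on_cong by blast
    then have cg: "continuous_on (cball 0 1) g" using continuous_on_subset BV(2) by blast
    have "g y = 0" if "y \<in> ball 0 1" for y unfolding g_def using repB[OF that] by simp
    then have "g x = 0" by (rule extend_zero[OF cg _ x])
    then show "(curl (curl (\<lambda>y. P y *\<^sub>R y)) x + \<tau> x) $ m = \<eta> x $ m" unfolding g_def by simp
  qed
  have "smooth_on_Omega P" "smooth_on_Omega T"
    unfolding smooth_on_Omega_def using oV BV(2) smP smT by blast+
  moreover have "pol_tor_rep \<eta> P T"
    unfolding pol_tor_rep_def using rep unfolding \<tau>_def by simp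
  ultimately show ?thesis using harmP harmT by blast
qed



theorem mainTheorem3:
  fixes \<eta> :: "real^3 \<Rightarrow> real^3"
  assumes "smooth_on_Omega \<eta>"
    and "\<forall>x\<in>cball 0 1. div3 \<eta> x = 0"
    and "\<forall>x\<in>cball 0 1. curl (curl \<eta>) x = 0"
  shows "(\<exists>P T. smooth_on_Omega P \<and> smooth_on_Omega T \<and> pol_tor_rep \<eta> P T
              \<and> harmonic_on_Omega P \<and> harmonic_on_Omega T)
       \<and> (\<forall>P T. smooth_on_Omega P \<and> smooth_on_Omega T \<and> pol_tor_rep \<eta> P T
              \<and> harmonic_on_Omega P \<and> harmonic_on_Omega T \<longrightarrow>
              (\<forall>x\<in>cball 0 1. curl (curl (\<lambda>y. P y *\<^sub>R y)) x = grad (dr_rP P) x)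
              \<and> harmonic_on_Omega (dr_rP P))"
proof
  show "\<exists>P T. smooth_on_Omega P \<and> smooth_on_Omega T \<and> pol_tor_rep \<eta> P T
              \<and> harmonic_on_Omega P \<and> harmonic_on_Omega T"
    by (rule part1[OF assms])
  show "\<forall>P T. smooth_on_Omega P \<and> smooth_on_Omega T \<and> pol_tor_rep \<eta> P T
              \<and> harmonic_on_Omega P \<and> harmonic_on_Omega T \<longrightarrow>
              (\<forall>x\<in>cball 0 1. curl (curl (\<lambda>y. P y *\<^sub>R y)) x = grad (dr_rP P) x)
              \<and> harmonic_on_Omega (dr_rP P)"
    using part2 by blast
qed

end
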